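(* Let $\lambda \in P$ and $\lhd \in \mathrm{RO}(\lambda, \Delta^{+})$. Then the total order $<$ on $L := \mathrm{Inv}(\lambda)$ is an affine reflection order, i.e.: (1) if $\alpha^{\vee}, \beta^{\vee} \in L$ and $\alpha^{\vee}+\beta^{\vee}$ is a positive real affine coroot, then $\alpha^{\vee}+\beta^{\vee} \in L$ and either $\alpha^{\vee} < \alpha^{\vee}+\beta^{\vee} < \beta^{\vee}$ or $\beta^{\vee} < \alpha^{\vee}+\beta^{\vee} < \alpha^{\vee}$; (2) if $\alpha^{\vee}, \beta^{\vee}$ are positive real affine coroots with $\alpha^{\vee}+\beta^{\vee} \in L$, then either ($\alpha^{\vee} \in L$ and $\alpha^{\vee} < \alpha^{\vee}+\beta^{\vee}$) or ($\beta^{\vee} \in L$ and $\beta^{\vee} < \alpha^{\vee}+\beta^{\vee}$).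
   Context: Let $\mathfrak{g}$ be a finite-dimensional complex simple Lie algebra with root system $\Delta$, positive roots $\Delta^{+}$, weight lattice $P$ and pairing $\langle\cdot,\cdot\rangle$; $\alpha^\vee$ is the coroot of $\alpha$. For $\lambda\in P$, $\Delta^{+}(\lambda)_{>0}$, $\Delta^{+}(\lambda)_{=0}$, $\Delta^{+}(\lambda)_{<0}$ denote the sets of $\alpha \in \Delta^{+}$ with $\langle\lambda,\alpha^\vee\rangle$ respectively $>0$, $=0$, $<0$. A total order $\lhd$ on $\Delta^{+}$ is a reflection order if whenever $\alpha,\beta,\alpha+\beta\in\Delta^+$, either $\alpha\lhd\alpha+\beta\lhd\beta$ or $\beta\lhd\alpha+\beta\lhd\alpha$; $\mathrm{RO}(\lambda,\Delta^+)$ is the set of reflection orders $\lhd$ with $\alpha\lhd\beta\lhd\gamma$ for all $\alpha\in\Delta^+(\lambda)_{<0}$, $\beta\in\Delta^+(\lambda)_{=0}$, $\gamma\in\Delta^+(\lambda)_{>0}$. Affine coroots: let $\tilde\delta$ be a formal symbol; real affine coroots are $\gamma^{\vee}+k\tilde\delta$ ($\gamma\in\Delta$, $k\in\mathbb{Z}$); for $\beta^\vee=\gamma^\vee+k\tilde\delta$ set $\overline{\beta^\vee}:=\gamma^\vee$, $\overline{\beta}:=\gamma$, $\deg(\beta^\vee):=k$; $\beta^\vee$ is positive if $k>0$ or ($k=0$ and $\gamma\in\Delta^+$), negative otherwise. $t_\lambda(\gamma^\vee+k\tilde\delta)=\gamma^\vee+(k-\langle\lambda,\gamma^\vee\rangle)\tilde\delta$,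 and $\mathrm{Inv}(\lambda)$ is the set of positive real affine coroots $\beta^\vee$ with $t_\lambda(\beta^\vee)$ negative. For $\beta^\vee\in\mathrm{Inv}(\lambda)$ one has $\langle\lambda,\overline{\beta^\vee}\rangle>0$ and $\overline\beta\in\Delta^+(\lambda)_{>0}\sqcup(-\Delta^+(\lambda)_{<0})$; set $d(\beta^\vee):=\deg(\beta^\vee)/\langle\lambda,\overline{\beta^\vee}\rangle$. Define a total order $\prec$ on $\Delta^+(\lambda)_{>0}\sqcup(-\Delta^+(\lambda)_{<0})$: every element of $\Delta^+(\lambda)_{>0}$ precedes every element of $-\Delta^+(\lambda)_{<0}$; on $\Delta^+(\lambda)_{>0}$, $\gamma\prec\gamma'$ iff $\gamma\lhd\gamma'$; on $-\Delta^+(\lambda)_{<0}$, $-\alpha\prec-\alpha'$ iff $\alpha\lhd\alpha'$. The total order $<$ on $\mathrm{Inv}(\lambda)$ is: $\beta^\vee<\beta'^\vee$ iff $d(\beta^\vee)<d(\beta'^\vee)$, or $d(\beta^\vee)=d(\beta'^\vee)$ and $\overline{\beta'}\prec\overline{\beta}$. *)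

theory Defs
  imports "HOL-Analysis.Analysis"
begin

text \<open>The root system of a finite-dimensional complex simple Lie algebra is a reduced,
  crystallographic, irreducible root system in a real Euclidean space (the real span of the roots,
  with the Killing-form-induced inner product).\<close>

definition coroot :: "'a::euclidean_space \<Rightarrow> 'a" where
  "coroot \<alpha> = (2 / (\<alpha> \<bullet> \<alpha>)) *\<^sub>R \<alpha>"

definition pairing :: "'a::euclidean_space \<Rightarrow> 'a \<Rightarrow> real" where
  "pairing \<mu> \<alpha> = \<mu> \<bullet> coroot \<alpha>"

definition reduced_root_system :: "'a::euclidean_space set \<Rightarrow> bool" where
  "reduced_root_system \<Delta> \<longleftrightarrow>
     finite \<Delta> \<and> 0 \<notin> \<Delta> \<and> span \<Delta> = UNIV \<and>
     (\<forall>\<alpha>\<in>\<Delta>. \<forall>\<beta>\<in>\<Delta>. \<beta> - pairing \<beta> \<alpha> *\<^sub>R \<alpha> \<in> \<Delta>) \<and>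
     (\<forall>\<alpha>\<in>\<Delta>. \<forall>\<beta>\<in>\<Delta>. pairing \<beta> \<alpha> \<in> \<int>) \<and>
     (\<forall>\<alpha>\<in>\<Delta>. \<forall>c::real. c *\<^sub>R \<alpha> \<in> \<Delta> \<longrightarrow> c = 1 \<or> c = -1)"

definition irreducible_root_system :: "'a::euclidean_space set \<Rightarrow> bool" where
  "irreducible_root_system \<Delta> \<longleftrightarrow> reduced_root_system \<Delta> \<and>
     \<not> (\<exists>A B. A \<noteq> {} \<and> B \<noteq> {} \<and> A \<union> B = \<Delta> \<and> A \<inter> B = {} \<and>
            (\<forall>a\<in>A. \<forall>b\<in>B. a \<bullet> b = 0))"

definition positive_system :: "'a::euclidean_space set \<Rightarrow> 'a set \<Rightarrow> bool" where
  "positive_system \<Delta> Dp \<longleftrightarrow>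
     (\<exists>\<rho>. (\<forall>\<alpha>\<in>\<Delta>. \<rho> \<bullet> \<alpha> \<noteq> 0) \<and> Dp = {\<alpha>\<in>\<Delta>. \<rho> \<bullet> \<alpha> > 0})"

definition weight_lattice :: "'a::euclidean_space set \<Rightarrow> 'a set" where
  "weight_lattice \<Delta> = {\<mu>. \<forall>\<alpha>\<in>\<Delta>. pairing \<mu> \<alpha> \<in> \<int>}"

definition pos_part :: "'a::euclidean_space set \<Rightarrow> 'a \<Rightarrow> 'a set" where
  "pos_part Dp \<mu> = {\<alpha>\<in>Dp. pairing \<mu> \<alpha> > 0}"
definition zero_part :: "'a::euclidean_space set \<Rightarrow> 'a \<Rightarrow> 'a set" where
  "zero_part Dp \<mu> = {\<alpha>\<in>Dp. pairing \<mu> \<alpha> = 0}"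
definition neg_part :: "'a::euclidean_space set \<Rightarrow> 'a \<Rightarrow> 'a set" where
  "neg_part Dp \<mu> = {\<alpha>\<in>Dp. pairing \<mu> \<alpha> < 0}"

definition strict_total_order_on :: "'b set \<Rightarrow> ('b \<Rightarrow> 'b \<Rightarrow> bool) \<Rightarrow> bool" where
  "strict_total_order_on S r \<longleftrightarrow>
     (\<forall>x\<in>S. \<not> r x x) \<and>
     (\<forall>x\<in>S. \<forall>y\<in>S. \<forall>z\<in>S. r x y \<longrightarrow> r y z \<longrightarrow> r x z) \<and>
     (\<forall>x\<in>S. \<forall>y\<in>S. x \<noteq> y \<longrightarrow> r x y \<or> r y x)"

definition reflection_order :: "'a::euclidean_space set \<Rightarrow> ('a \<Rightarrow> 'a \<Rightarrow> bool) \<Rightarrow> bool" where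
  "reflection_order Dp lhd \<longleftrightarrow> strict_total_order_on Dp lhd \<and>
     (\<forall>\<alpha>\<in>Dp. \<forall>\<beta>\<in>Dp. \<alpha> + \<beta> \<in> Dp \<longrightarrow>
        (lhd \<alpha> (\<alpha> + \<beta>) \<and> lhd (\<alpha> + \<beta>) \<beta>) \<or> (lhd \<beta> (\<alpha> + \<beta>) \<and> lhd (\<alpha> + \<beta>) \<alpha>))"

definition RO :: "'a::euclidean_space \<Rightarrow> 'a set \<Rightarrow> ('a \<Rightarrow> 'a \<Rightarrow> bool) set" where
  "RO \<mu> Dp = {lhd. reflection_order Dp lhd \<and>
      (\<forall>\<alpha>\<in>neg_part Dp \<mu>. \<forall>\<beta>\<in>zero_part Dp \<mu>. lhd \<alpha> \<beta>) \<and>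
      (\<forall>\<beta>\<in>zero_part Dp \<mu>. \<forall>\<gamma>\<in>pos_part Dp \<mu>. lhd \<beta> \<gamma>) \<and>
      (\<forall>\<alpha>\<in>neg_part Dp \<mu>. \<forall>\<gamma>\<in>pos_part Dp \<mu>. lhd \<alpha> \<gamma>)}"

text \<open>An element (v, k) of 'a \<times> real stands for v + k\<delta>. Real affine coroots:
  v a coroot, k an integer.\<close>

definition real_aff_coroot :: "'a::euclidean_space set \<Rightarrow> 'a \<times> real \<Rightarrow> bool" where
  "real_aff_coroot \<Delta> b \<longleftrightarrow> fst b \<in> coroot ` \<Delta> \<and> snd b \<in> \<int>"

definition aff_add :: "'a::euclidean_space \<times> real \<Rightarrow> 'a \<times> real \<Rightarrow> 'a \<times> real" where
  "aff_add a b = (fst a + fst b, snd a + snd b)"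

text \<open>bar(\<beta>): the root whose coroot is the finite part of \<beta>-check.\<close>
definition bar_root :: "'a::euclidean_space \<times> real \<Rightarrow> 'a" where
  "bar_root b = coroot (fst b)"

definition aff_deg :: "'a::euclidean_space \<times> real \<Rightarrow> real" where
  "aff_deg b = snd b"

definition aff_positive :: "'a::euclidean_space set \<Rightarrow> 'a \<times> real \<Rightarrow> bool" where
  "aff_positive Dp b \<longleftrightarrow> aff_deg b > 0 \<or> (aff_deg b = 0 \<and> bar_root b \<in> Dp)"

definition t_trans :: "'a::euclidean_space \<Rightarrow> 'a \<times> real \<Rightarrow> 'a \<times> real" where
  "t_trans \<mu> b = (fst b, snd b - \<mu> \<bullet> fst b)"

definition Inv :: "'a::euclidean_space set \<Rightarrow> 'a set \<Rightarrow> 'a \<Rightarrow> ('a \<times> real) set" where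
  "Inv \<Delta> Dp \<mu> = {b. real_aff_coroot \<Delta> b \<and> aff_positive Dp b \<and>
                     \<not> aff_positive Dp (t_trans \<mu> b)}"

definition d_val :: "'a::euclidean_space \<Rightarrow> 'a \<times> real \<Rightarrow> real" where
  "d_val \<mu> b = aff_deg b / (\<mu> \<bullet> fst b)"

definition prec_ord :: "'a::euclidean_space set \<Rightarrow> 'a \<Rightarrow> ('a \<Rightarrow> 'a \<Rightarrow> bool) \<Rightarrow> 'a \<Rightarrow> 'a \<Rightarrow> bool" where
  "prec_ord Dp \<mu> lhd \<gamma> \<gamma>' \<longleftrightarrow>
     (\<gamma> \<in> pos_part Dp \<mu> \<and> \<gamma>' \<in> uminus ` neg_part Dp \<mu>) \<or>
     (\<gamma> \<in> pos_part Dp \<mu> \<and> \<gamma>' \<in> pos_part Dp \<mu> \<and> lhd \<gamma> \<gamma>') \<or>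
     (\<gamma> \<in> uminus ` neg_part Dp \<mu> \<and> \<gamma>' \<in> uminus ` neg_part Dp \<mu> \<and> lhd (- \<gamma>) (- \<gamma>'))"

definition inv_less :: "'a::euclidean_space set \<Rightarrow> 'a \<Rightarrow> ('a \<Rightarrow> 'a \<Rightarrow> bool) \<Rightarrow>
    'a \<times> real \<Rightarrow> 'a \<times> real \<Rightarrow> bool" where
  "inv_less Dp \<mu> lhd b b' \<longleftrightarrow>
     d_val \<mu> b < d_val \<mu> b' \<or>
     (d_val \<mu> b = d_val \<mu> b' \<and> prec_ord Dp \<mu> lhd (bar_root b') (bar_root b))"

end

theory Submission
  imports Defs
begin

lemma coroot_coroot: "x \<noteq> 0 \<Longrightarrow> coroot (coroot x) = x"
  unfolding coroot_def by (simp add: field_simps)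

lemma coroot_neg: "coroot (- x) = - coroot x"
  unfolding coroot_def by simp

lemma coroot_inj: "x \<noteq> 0 \<Longrightarrow> y \<noteq> 0 \<Longrightarrow> coroot x = coroot y \<Longrightarrow> x = y"
  by (metis coroot_coroot)

lemma inner_coroot: "x \<noteq> 0 \<Longrightarrow> r \<bullet> coroot x = (2 / (x \<bullet> x)) * (r \<bullet> x)"
  unfolding coroot_def by simp

lemma coroot_nz: "x \<noteq> 0 \<Longrightarrow> coroot x \<noteq> 0"
  unfolding coroot_def by simp

lemma sign_coroot:
  assumes "x \<noteq> 0" shows "r \<bullet> coroot x > 0 \<longleftrightarrow> r \<bullet> x > 0" "r \<bullet> coroot x < 0 \<longleftrightarrow> r \<bullet> x < 0"
proof -
  have "x \<bullet> x > 0" using assms by simp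
  then show "r \<bullet> coroot x > 0 \<longleftrightarrow> r \<bullet> x > 0" "r \<bullet> coroot x < 0 \<longleftrightarrow> r \<bullet> x < 0"
    using assms by (auto simp: inner_coroot zero_less_divide_iff divide_less_0_iff)
      (metis inner_ge_zero not_le)+
qed


lemma pairing_self: "x \<noteq> 0 \<Longrightarrow> pairing x x = 2"
  unfolding pairing_def by (simp add: inner_coroot)

lemma rrs_neg: assumes "reduced_root_system \<Delta>" "x \<in> \<Delta>" shows "- x \<in> \<Delta>"
proof -
  have nz: "x \<noteq> 0" using assms unfolding reduced_root_system_def by auto
  have "x - pairing x x *\<^sub>R x \<in> \<Delta>" using assms unfolding reduced_root_system_def by auto
  moreover have "x - 2 *\<^sub>R x = - x" by (simp add: scaleR_2)
  ultimately show ?thesis using nz by (simp add: pairing_self)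
qed

lemma rrs_refl: "reduced_root_system \<Delta> \<Longrightarrow> a \<in> \<Delta> \<Longrightarrow> b \<in> \<Delta> \<Longrightarrow> b - pairing b a *\<^sub>R a \<in> \<Delta>"
  unfolding reduced_root_system_def by auto

lemma rrs_int: "reduced_root_system \<Delta> \<Longrightarrow> a \<in> \<Delta> \<Longrightarrow> b \<in> \<Delta> \<Longrightarrow> pairing b a \<in> \<int>"
  unfolding reduced_root_system_def by auto

lemma rrs_red: "reduced_root_system \<Delta> \<Longrightarrow> a \<in> \<Delta> \<Longrightarrow> c *\<^sub>R a \<in> \<Delta> \<Longrightarrow> c = 1 \<or> c = -1"
  unfolding reduced_root_system_def by auto

lemma rrs_nz: "reduced_root_system \<Delta> \<Longrightarrow> a \<in> \<Delta> \<Longrightarrow> a \<noteq> 0"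
  unfolding reduced_root_system_def by auto

definition btw :: "('b \<Rightarrow> 'b \<Rightarrow> bool) \<Rightarrow> 'b \<Rightarrow> 'b \<Rightarrow> 'b \<Rightarrow> bool" where
  "btw r x y z \<longleftrightarrow> (r x y \<and> r y z) \<or> (r z y \<and> r y x)"

lemma btw_sym: "btw r x y z \<longleftrightarrow> btw r z y x"
  unfolding btw_def by blast

lemma chain1:
  assumes "strict_total_order_on S r" "a \<in> S" "b \<in> S" "c \<in> S" "d \<in> S"
    "btw r a b c" "btw r b d c"
  shows "btw r a d c"
  using assms unfolding btw_def strict_total_order_on_def by metis

lemma chain2:
  assumes "strict_total_order_on S r" "a \<in> S" "b \<in> S" "c \<in> S" "d \<in> S"
    "btw r a b d" "btw r b c d"
  shows "btw r a b c"
  using assms unfolding btw_def strict_total_order_on_def by metis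

lemma chain3:
  assumes "strict_total_order_on S r" "a \<in> S" "b \<in> S" "c \<in> S" "d1 \<in> S" "d2 \<in> S"
    "btw r d1 c d2" "btw r c a d1" "btw r c b d2"
  shows "btw r a c b"
  using assms unfolding btw_def strict_total_order_on_def by metis

lemma sumc:
  assumes "reflection_order Dp lhd" "x \<in> Dp" "y \<in> Dp" "x + y \<in> Dp"
  shows "btw lhd x (x + y) y"
  using assms unfolding reflection_order_def btw_def by blast

lemma int_cases:
  fixes i j :: int
  assumes "i*j < 4" "0 \<le> i*j" "(i=0) = (j=0)" "\<bar>i\<bar> \<le> \<bar>j\<bar>"
  shows "(i=0 \<and> j=0) \<or> (i=1 \<and> (j=1 \<or> j=2 \<or> j=3)) \<or> (i=-1 \<and> (j=-1 \<or> j=-2 \<or> j=-3))"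
proof (cases "i = 0")
  case True then show ?thesis using assms by auto
next
  case False
  have "\<bar>i\<bar> * \<bar>i\<bar> \<le> \<bar>i\<bar> * \<bar>j\<bar>" using assms(4) by (rule mult_left_mono) auto
  also have "\<dots> = \<bar>i*j\<bar>" by (simp add: abs_mult)
  finally have h: "\<bar>i\<bar> * \<bar>i\<bar> < 4" using assms(1,2) by linarith
  have "\<bar>i\<bar> < 2"
  proof (rule ccontr)
    assume "\<not> \<bar>i\<bar> < 2"
    then have "2 * 2 \<le> \<bar>i\<bar> * \<bar>i\<bar>" by (intro mult_mono) auto
    then show False using h by linarith
  qed
  then have "i = 1 \<or> i = -1" using False by linarith
  then show ?thesis using assms False by auto
qed

lemma gamma_formula:
  fixes \<alpha> \<beta> \<gamma> :: "'a::euclidean_space"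
  assumes "\<alpha> \<noteq> 0" "\<beta> \<noteq> 0" "\<gamma> \<noteq> 0" "coroot \<gamma> = coroot \<alpha> + coroot \<beta>"
    and La: "La = \<alpha> \<bullet> \<alpha>" and Lb: "Lb = \<beta> \<bullet> \<beta>" and p: "p = \<alpha> \<bullet> \<beta>"
    and zz: "zz = 4/La + 4/Lb + 8*p/(La*Lb)"
  shows "\<gamma> = (4 / (La * zz)) *\<^sub>R \<alpha> + (4/(Lb*zz)) *\<^sub>R \<beta>" "zz > 0"
proof -
  define z where "z = coroot \<alpha> + coroot \<beta>"
  have z: "z = (2/La) *\<^sub>R \<alpha> + (2/Lb) *\<^sub>R \<beta>" unfolding z_def coroot_def La Lb ..
  have Lpos: "La > 0" "Lb > 0" using assms La Lb by auto
  have "z \<bullet> z = zz" unfolding z zz using Lpos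
    by (simp add: inner_add_left inner_add_right inner_commute[of \<beta> \<alpha>] p La[symmetric] Lb[symmetric]
        field_simps)
  moreover have "z \<noteq> 0" unfolding z_def using assms coroot_nz by metis
  ultimately show zpos: "zz > 0" by auto
  have "\<gamma> = coroot z" using assms coroot_coroot z_def by metis
  also have "\<dots> = (2/zz) *\<^sub>R z" unfolding coroot_def \<open>z \<bullet> z = zz\<close> ..
  also have "\<dots> = (4 / (La * zz)) *\<^sub>R \<alpha> + (4/(Lb*zz)) *\<^sub>R \<beta>"
    unfolding z by (simp add: scaleR_add_right mult.commute)
  finally show "\<gamma> = (4 / (La * zz)) *\<^sub>R \<alpha> + (4/(Lb*zz)) *\<^sub>R \<beta>" .
qed

context
  fixes \<Delta> Dp :: "'a::euclidean_space set" and \<rho> \<alpha> \<beta> \<gamma> :: 'a and lhd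
  assumes R: "reduced_root_system \<Delta>" and Dp: "Dp = {x\<in>\<Delta>. \<rho> \<bullet> x > 0}"
    and rho: "\<forall>x\<in>\<Delta>. \<rho> \<bullet> x \<noteq> 0"
    and RO: "reflection_order Dp lhd"
    and a: "\<alpha> \<in> Dp" and b: "\<beta> \<in> Dp" and c: "\<gamma> \<in> Dp"
    and cr: "coroot \<gamma> = coroot \<alpha> + coroot \<beta>"
begin

lemma ctx_basic:
  shows "\<alpha> \<in> \<Delta>" "\<beta> \<in> \<Delta>" "\<gamma> \<in> \<Delta>" "\<rho> \<bullet> \<alpha> > 0" "\<rho> \<bullet> \<beta> > 0" "\<rho> \<bullet> \<gamma> > 0"
    "\<alpha> \<noteq> 0" "\<beta> \<noteq> 0" "\<gamma> \<noteq> 0" "strict_total_order_on Dp lhd"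
  using a b c Dp R rrs_nz RO reflection_order_def by auto

lemma inDp: "x \<in> \<Delta> \<Longrightarrow> \<rho> \<bullet> x > 0 \<Longrightarrow> x \<in> Dp" using Dp by auto

lemma gam_ctx:
  "\<gamma> = (4 / ((\<alpha>\<bullet>\<alpha>) * (4/(\<alpha>\<bullet>\<alpha>) + 4/(\<beta>\<bullet>\<beta>) + 8*(\<alpha>\<bullet>\<beta>)/((\<alpha>\<bullet>\<alpha>)*(\<beta>\<bullet>\<beta>))))) *\<^sub>R \<alpha>
     + (4/((\<beta>\<bullet>\<beta>)*(4/(\<alpha>\<bullet>\<alpha>) + 4/(\<beta>\<bullet>\<beta>) + 8*(\<alpha>\<bullet>\<beta>)/((\<alpha>\<bullet>\<alpha>)*(\<beta>\<bullet>\<beta>))))) *\<^sub>R \<beta>"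
  using gamma_formula[OF ctx_basic(7,8,9) cr refl refl refl refl] by auto

lemma pair_ab: "pairing \<beta> \<alpha> = 2*(\<alpha>\<bullet>\<beta>)/(\<alpha>\<bullet>\<alpha>)" "pairing \<alpha> \<beta> = 2*(\<alpha>\<bullet>\<beta>)/(\<beta>\<bullet>\<beta>)"
  unfolding pairing_def using ctx_basic(7,8) by (simp_all add: inner_coroot inner_commute)

lemma case_mm11:
  assumes "\<alpha>\<bullet>\<alpha> = \<beta>\<bullet>\<beta>" "\<alpha>\<bullet>\<beta> = -(\<beta>\<bullet>\<beta>)/2"
  shows "btw lhd \<alpha> \<gamma> \<beta>"
proof -
  have L: "\<beta>\<bullet>\<beta> > 0" using ctx_basic by simp
  have "\<gamma> = \<alpha> + \<beta>" using gam_ctx unfolding assms using L by (simp add: field_simps)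
  then show ?thesis using sumc[OF RO a b] c by simp
qed

lemma case_m12:
  assumes "\<alpha>\<bullet>\<alpha> = 2*(\<beta>\<bullet>\<beta>)" "\<alpha>\<bullet>\<beta> = -(\<beta>\<bullet>\<beta>)"
  shows "btw lhd \<alpha> \<gamma> \<beta>"
proof -
  have L: "\<beta>\<bullet>\<beta> > 0" using ctx_basic by simp
  have g0: "\<gamma> = \<alpha> + 2 *\<^sub>R \<beta>" using gam_ctx unfolding assms using L by (simp add: field_simps)
  then have g: "\<gamma> = (\<alpha> + \<beta>) + \<beta>" by (simp add: scaleR_2 algebra_simps)
  have "pairing \<beta> \<alpha> = -1" using pair_ab assms L by simp
  then have "\<beta> - pairing \<beta> \<alpha> *\<^sub>R \<alpha> = \<alpha> + \<beta>" by simp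
  then have s: "\<alpha> + \<beta> \<in> Dp" using rrs_refl[OF R ctx_basic(1,2)] inDp ctx_basic(4,5)
    by (metis add_pos_pos inner_add_right)
  have 1: "btw lhd \<alpha> (\<alpha>+\<beta>) \<beta>" using sumc[OF RO a b s] .
  have 2: "btw lhd (\<alpha>+\<beta>) \<gamma> \<beta>" using sumc[OF RO s b] c g by simp
  show ?thesis using chain1[OF ctx_basic(10) a s b c 1 2] .
qed

lemma case_m13:
  assumes "\<alpha>\<bullet>\<alpha> = 3*(\<beta>\<bullet>\<beta>)" "\<alpha>\<bullet>\<beta> = -3*(\<beta>\<bullet>\<beta>)/2"
  shows "btw lhd \<alpha> \<gamma> \<beta>"
proof -
  have L: "\<beta>\<bullet>\<beta> > 0" using ctx_basic by simp
  have g0: "\<gamma> = \<alpha> + 3 *\<^sub>R \<beta>" using gam_ctx unfolding assms using L by (simp add: field_simps)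
  have "(3::real) *\<^sub>R \<beta> = (2 + 1) *\<^sub>R \<beta>" by simp
  also have "\<dots> = \<beta> + \<beta> + \<beta>" by (simp only: scaleR_add_left scaleR_one scaleR_2)
  finally have g: "\<gamma> = ((\<alpha> + \<beta>) + \<beta>) + \<beta>" using g0 by (simp add: algebra_simps)
  have "pairing \<beta> \<alpha> = -1" using pair_ab assms L by simp
  then have "\<beta> - pairing \<beta> \<alpha> *\<^sub>R \<alpha> = \<alpha> + \<beta>" by simp
  then have s: "\<alpha> + \<beta> \<in> Dp" using rrs_refl[OF R ctx_basic(1,2)] inDp ctx_basic(4,5)
    by (metis add_pos_pos inner_add_right)
  have "pairing (\<alpha> + \<beta>) \<beta> = -1" unfolding pairing_def using ctx_basic(8) assms L
    by (simp add: inner_coroot inner_add_left field_simps)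
  then have "(\<alpha> + \<beta>) - pairing (\<alpha> + \<beta>) \<beta> *\<^sub>R \<beta> = (\<alpha> + \<beta>) + \<beta>" by simp
  then have s2: "(\<alpha> + \<beta>) + \<beta> \<in> Dp" using rrs_refl[OF R ctx_basic(2)] s Dp ctx_basic(5)
    by (metis (no_types, lifting) add_pos_pos inner_add_right inDp mem_Collect_eq)
  have 1: "btw lhd \<alpha> (\<alpha>+\<beta>) \<beta>" using sumc[OF RO a b s] .
  have 2: "btw lhd (\<alpha>+\<beta>) (\<alpha>+\<beta>+\<beta>) \<beta>" using sumc[OF RO s b s2] .
  have 3: "btw lhd (\<alpha>+\<beta>+\<beta>) \<gamma> \<beta>" using sumc[OF RO s2 b] c g by simp
  have 4: "btw lhd \<alpha> (\<alpha>+\<beta>+\<beta>) \<beta>" using chain1[OF ctx_basic(10) a s b s2 1 2] .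
  show ?thesis using chain1[OF ctx_basic(10) a s2 b c 4 3] .
qed

end

lemma coef00a: "(A::real) > 0 \<Longrightarrow> B > 0 \<Longrightarrow> 4/(A*(4/A+4/B+8*0/(A*B))) = B/(A+B)"
proof -
  assume a: "A > 0" "B > 0"
  have "A*(4/A+4/B+8*0/(A*B)) = 4*(A+B)/B" using a by (simp add: field_simps)
  moreover have "4 / (4*(A+B)/B) = B/(A+B)" using a by (simp add: divide_simps)
  ultimately show ?thesis by simp
qed

lemma coef00b: "(A::real) > 0 \<Longrightarrow> B > 0 \<Longrightarrow> 4/(B*(4/A+4/B+8*0/(A*B))) = A/(A+B)"
proof -
  assume a: "A > 0" "B > 0"
  have "B*(4/A+4/B+8*0/(A*B)) = 4*(A+B)/A" using a by (simp add: field_simps)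
  moreover have "4 / (4*(A+B)/A) = A/(A+B)" using a by (simp add: divide_simps)
  ultimately show ?thesis by simp
qed

lemma r_lt2: "(A::real) > 0 \<Longrightarrow> B > 0 \<Longrightarrow> 2*A/(A+B) < 2"
  by (simp add: divide_less_eq)

context
  fixes \<Delta> Dp :: "'a::euclidean_space set" and \<rho> \<alpha> \<beta> \<gamma> :: 'a and lhd
  assumes R: "reduced_root_system \<Delta>" and Dp: "Dp = {x\<in>\<Delta>. \<rho> \<bullet> x > 0}"
    and rho: "\<forall>x\<in>\<Delta>. \<rho> \<bullet> x \<noteq> 0"
    and RO: "reflection_order Dp lhd"
    and a: "\<alpha> \<in> Dp" and b: "\<beta> \<in> Dp" and c: "\<gamma> \<in> Dp"
    and cr: "coroot \<gamma> = coroot \<alpha> + coroot \<beta>"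
begin

lemmas cb = ctx_basic[OF R Dp rho RO a b c cr]
lemmas gm = gam_ctx[OF R Dp rho RO a b c cr]

lemma case_00:
  assumes p0: "\<alpha>\<bullet>\<beta> = 0" and le: "\<beta>\<bullet>\<beta> \<le> \<alpha>\<bullet>\<alpha>"
  shows "btw lhd \<alpha> \<gamma> \<beta>"
proof -
  have L: "\<beta>\<bullet>\<beta> > 0" "\<alpha>\<bullet>\<alpha> > 0" using cb by auto
  have g1: "\<gamma> = (\<beta>\<bullet>\<beta> / (\<alpha>\<bullet>\<alpha> + \<beta>\<bullet>\<beta>)) *\<^sub>R \<alpha> + (\<alpha>\<bullet>\<alpha> / (\<alpha>\<bullet>\<alpha> + \<beta>\<bullet>\<beta>)) *\<^sub>R \<beta>"
    using gm unfolding p0 coef00a[OF L(2) L(1)] coef00b[OF L(2) L(1)] .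
  have "pairing \<gamma> \<beta> = 2 * (\<alpha>\<bullet>\<alpha>) / (\<alpha>\<bullet>\<alpha> + \<beta>\<bullet>\<beta>)"
    unfolding pairing_def using cb(8) L
    by (subst g1) (simp add: inner_coroot inner_add_left inner_commute[of \<beta> \<alpha>] p0 field_simps)
  moreover obtain k :: int where "pairing \<gamma> \<beta> = of_int k"
    using rrs_int[OF R cb(2) cb(3)] Ints_cases by metis
  ultimately have k: "of_int k = 2 * (\<alpha>\<bullet>\<alpha>) / (\<alpha>\<bullet>\<alpha> + \<beta>\<bullet>\<beta>)" by simp
  have spos: "0 < \<alpha>\<bullet>\<alpha> + \<beta>\<bullet>\<beta>" using L by linarith
  have "of_int k \<ge> (1::real)" unfolding k using spos le by (simp add: le_divide_eq)
  moreover have "of_int k < (2::real)" unfolding k using r_lt2[OF L(2) L(1)] .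
  ultimately have "k = 1" by linarith
  then have eqL: "\<alpha>\<bullet>\<alpha> = \<beta>\<bullet>\<beta>" using k L by (simp add: field_simps)
  have g: "\<gamma> = (1/2) *\<^sub>R \<alpha> + (1/2) *\<^sub>R \<beta>" using g1 unfolding eqL using L by simp
  have "pairing \<gamma> \<alpha> = 1"
    unfolding pairing_def using cb(7) L
    by (subst g) (simp add: inner_coroot inner_add_left p0 inner_commute[of \<beta> \<alpha>] eqL field_simps)
  then have dD: "\<gamma> - \<alpha> \<in> \<Delta>" using rrs_refl[OF R cb(1) cb(3)] by simp
  have sto: "strict_total_order_on Dp lhd" using cb by simp
  show ?thesis
  proof (cases "\<rho> \<bullet> (\<gamma> - \<alpha>) > 0")
    case True
    then have d: "\<gamma> - \<alpha> \<in> Dp" using dD Dp by auto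
    have 1: "btw lhd \<alpha> \<gamma> (\<gamma> - \<alpha>)" using sumc[OF RO a d] c by simp
    have e2: "\<gamma> + (\<gamma> - \<alpha>) = \<beta>" using g by (simp add: algebra_simps scaleR_2[symmetric])
    have 2: "btw lhd \<gamma> \<beta> (\<gamma> - \<alpha>)" using sumc[OF RO c d] b e2 by simp
    show ?thesis using chain2[OF sto a c b d 1 2] .
  next
    case False
    then have "\<rho> \<bullet> (\<gamma> - \<alpha>) < 0" using rho dD by force
    then have e: "\<alpha> - \<gamma> \<in> Dp" using rrs_neg[OF R dD] Dp by (auto simp: inner_diff_right)
    have 1: "btw lhd \<gamma> \<alpha> (\<alpha> - \<gamma>)" using sumc[OF RO c e] a by simp
    have e2: "\<beta> + (\<alpha> - \<gamma>) = \<gamma>" using g by (simp add: algebra_simps scaleR_2[symmetric])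
    have 2: "btw lhd \<beta> \<gamma> (\<alpha> - \<gamma>)" using sumc[OF RO b e] c e2 by simp
    show ?thesis using chain2[OF sto b c a e 2 1] btw_sym by metis
  qed
qed

end

lemma three_scale: "(3::real) *\<^sub>R (x::'a::real_vector) = x + x + x"
proof -
  have "(3::real) = 1 + 1 + 1" by simp
  then have "(3::real) *\<^sub>R x = (1 + 1 + 1) *\<^sub>R x" by metis
  also have "\<dots> = x + x + x" by (simp only: scaleR_add_left scaleR_one)
  finally show ?thesis .
qed

context
  fixes \<Delta> Dp :: "'a::euclidean_space set" and \<rho> \<alpha> \<beta> \<gamma> :: 'a and lhd
  assumes R: "reduced_root_system \<Delta>" and Dp: "Dp = {x\<in>\<Delta>. \<rho> \<bullet> x > 0}"
    and rho: "\<forall>x\<in>\<Delta>. \<rho> \<bullet> x \<noteq> 0"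
    and RO: "reflection_order Dp lhd"
    and a: "\<alpha> \<in> Dp" and b: "\<beta> \<in> Dp" and c: "\<gamma> \<in> Dp"
    and cr: "coroot \<gamma> = coroot \<alpha> + coroot \<beta>"
begin

lemmas cbE = ctx_basic[OF R Dp rho RO a b c cr]
lemmas gmE = gam_ctx[OF R Dp rho RO a b c cr]

lemma case_12:
  assumes "\<alpha>\<bullet>\<alpha> = 2*(\<beta>\<bullet>\<beta>)" "\<alpha>\<bullet>\<beta> = \<beta>\<bullet>\<beta>"
  shows False
proof -
  have L: "\<beta>\<bullet>\<beta> > 0" using cbE by simp
  have g: "\<gamma> = (1/5) *\<^sub>R \<alpha> + (2/5) *\<^sub>R \<beta>" using gmE unfolding assms using L by (simp add: field_simps)
  have "pairing \<gamma> \<beta> = 6/5"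
    unfolding pairing_def using cbE(8) L
    by (subst g) (simp add: inner_coroot inner_add_left assms field_simps)
  moreover obtain k :: int where "pairing \<gamma> \<beta> = of_int k"
    using rrs_int[OF R cbE(2) cbE(3)] Ints_cases by metis
  ultimately have "real_of_int (5 * k) = real_of_int 6" by simp
  then have "5 * k = 6" by (simp only: of_int_eq_iff)
  then show False by presburger
qed

lemma case_13:
  assumes "\<alpha>\<bullet>\<alpha> = 3*(\<beta>\<bullet>\<beta>)" "\<alpha>\<bullet>\<beta> = 3*(\<beta>\<bullet>\<beta>)/2"
  shows False
proof -
  have L: "\<beta>\<bullet>\<beta> > 0" using cbE by simp
  have g: "\<gamma> = (1/7) *\<^sub>R \<alpha> + (3/7) *\<^sub>R \<beta>" using gmE unfolding assms using L by (simp add: field_simps)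
  have "pairing \<gamma> \<beta> = 9/7"
    unfolding pairing_def using cbE(8) L
    by (subst g) (simp add: inner_coroot inner_add_left assms field_simps)
  moreover obtain k :: int where "pairing \<gamma> \<beta> = of_int k"
    using rrs_int[OF R cbE(2) cbE(3)] Ints_cases by metis
  ultimately have "real_of_int (7 * k) = real_of_int 9" by simp
  then have "7 * k = 9" by (simp only: of_int_eq_iff)
  then show False by presburger
qed

lemma case_11:
  assumes eqL: "\<alpha>\<bullet>\<alpha> = \<beta>\<bullet>\<beta>" and p: "\<alpha>\<bullet>\<beta> = (\<beta>\<bullet>\<beta>)/2"
  shows "btw lhd \<alpha> \<gamma> \<beta>"
proof -
  have L: "\<beta>\<bullet>\<beta> > 0" using cbE by simp
  have g: "\<gamma> = (1/3) *\<^sub>R \<alpha> + (1/3) *\<^sub>R \<beta>" using gmE unfolding assms using L by (simp add: field_simps)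
  have h: "\<alpha> = \<gamma> + \<gamma> + \<gamma> - \<beta>"
  proof -
    have "(3::real) *\<^sub>R \<gamma> = \<alpha> + \<beta>" unfolding g by (simp add: scaleR_add_right)
    then show ?thesis unfolding three_scale by (simp add: algebra_simps)
  qed
  have "pairing \<gamma> \<alpha> = 1"
    unfolding pairing_def using cbE(7) L
    by (subst g) (simp add: inner_coroot inner_add_left inner_commute[of \<beta> \<alpha>] eqL p field_simps)
  then have d1: "\<gamma> - \<alpha> \<in> \<Delta>" using rrs_refl[OF R cbE(1) cbE(3)] by simp
  have "pairing \<gamma> \<beta> = 1"
    unfolding pairing_def using cbE(8) L
    by (subst g) (simp add: inner_coroot inner_add_left eqL p field_simps)
  then have d2: "\<gamma> - \<beta> \<in> \<Delta>" using rrs_refl[OF R cbE(2) cbE(3)] by simp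
  have e1: "\<alpha> - \<gamma> \<in> \<Delta>" using rrs_neg[OF R d1] by simp
  have e2: "\<beta> - \<gamma> \<in> \<Delta>" using rrs_neg[OF R d2] by simp
  have sto: "strict_total_order_on Dp lhd" using cbE by simp
  have r1: "\<rho> \<bullet> (\<alpha> - \<gamma>) \<noteq> 0" "\<rho> \<bullet> (\<beta> - \<gamma>) \<noteq> 0" using rho e1 e2 by auto
  have rsum: "\<rho> \<bullet> (\<alpha> - \<gamma>) + \<rho> \<bullet> (\<beta> - \<gamma>) = \<rho> \<bullet> \<gamma>"
    unfolding h by (simp add: inner_add_right inner_diff_right)
  consider "\<rho> \<bullet> (\<alpha> - \<gamma>) > 0" "\<rho> \<bullet> (\<beta> - \<gamma>) > 0" | "\<rho> \<bullet> (\<alpha> - \<gamma>) < 0" | "\<rho> \<bullet> (\<beta> - \<gamma>) < 0"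
    using r1 by linarith
  then show ?thesis
  proof cases
    case 1
    then have D1: "\<alpha> - \<gamma> \<in> Dp" and D2: "\<beta> - \<gamma> \<in> Dp" using e1 e2 Dp by auto
    have eq: "(\<alpha> - \<gamma>) + (\<beta> - \<gamma>) = \<gamma>" using h by (simp add: algebra_simps)
    have 1: "btw lhd (\<alpha> - \<gamma>) \<gamma> (\<beta> - \<gamma>)" using sumc[OF RO D1 D2] c unfolding eq by simp
    have 2: "btw lhd \<gamma> \<alpha> (\<alpha> - \<gamma>)" using sumc[OF RO c D1] a by simp
    have 3: "btw lhd \<gamma> \<beta> (\<beta> - \<gamma>)" using sumc[OF RO c D2] b by simp
    show ?thesis using chain3[OF sto a b c D1 D2 1 2 3] btw_sym by metis
  next
    case 2
    then have E: "\<gamma> - \<alpha> \<in> Dp" using d1 Dp by (auto simp: inner_diff_right)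
    have D2: "\<beta> - \<gamma> \<in> Dp" using 2 rsum cbE(6) e2 Dp by auto
    have 1: "btw lhd \<alpha> \<gamma> (\<gamma> - \<alpha>)" using sumc[OF RO a E] c by simp
    have eq: "\<gamma> + (\<gamma> - \<alpha>) = \<beta> - \<gamma>" using h by (simp add: algebra_simps)
    have 2: "btw lhd \<gamma> (\<beta> - \<gamma>) (\<gamma> - \<alpha>)" using sumc[OF RO c E] D2 unfolding eq by simp
    have 3: "btw lhd \<gamma> \<beta> (\<beta> - \<gamma>)" using sumc[OF RO c D2] b by simp
    have 4: "btw lhd \<alpha> \<gamma> (\<beta> - \<gamma>)" using chain2[OF sto a c D2 E 1 2] .
    show ?thesis using chain2[OF sto a c b D2 4 3] .
  next
    case 3
    then have E: "\<gamma> - \<beta> \<in> Dp" using d2 Dp by (auto simp: inner_diff_right)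
    have D1: "\<alpha> - \<gamma> \<in> Dp" using 3 rsum cbE(6) e1 Dp by auto
    have 1: "btw lhd \<beta> \<gamma> (\<gamma> - \<beta>)" using sumc[OF RO b E] c by simp
    have eq: "\<gamma> + (\<gamma> - \<beta>) = \<alpha> - \<gamma>" using h by (simp add: algebra_simps)
    have 2: "btw lhd \<gamma> (\<alpha> - \<gamma>) (\<gamma> - \<beta>)" using sumc[OF RO c E] D1 unfolding eq by simp
    have 3: "btw lhd \<gamma> \<alpha> (\<alpha> - \<gamma>)" using sumc[OF RO c D1] a by simp
    have 4: "btw lhd \<beta> \<gamma> (\<alpha> - \<gamma>)" using chain2[OF sto b c D1 E 1 2] .
    show ?thesis using chain2[OF sto b c a D1 4 3] btw_sym by metis
  qed
qed

end

context
  fixes \<Delta> Dp :: "'a::euclidean_space set" and \<rho> \<alpha> \<beta> \<gamma> :: 'a and lhd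
  assumes R: "reduced_root_system \<Delta>" and Dp: "Dp = {x\<in>\<Delta>. \<rho> \<bullet> x > 0}"
    and rho: "\<forall>x\<in>\<Delta>. \<rho> \<bullet> x \<noteq> 0"
    and RO: "reflection_order Dp lhd"
    and a: "\<alpha> \<in> Dp" and b: "\<beta> \<in> Dp" and c: "\<gamma> \<in> Dp"
    and cr: "coroot \<gamma> = coroot \<alpha> + coroot \<beta>"
begin

lemmas cb' = ctx_basic[OF R Dp rho RO a b c cr]

lemma strict_cs: "(\<alpha>\<bullet>\<beta>)*(\<alpha>\<bullet>\<beta>) < (\<alpha>\<bullet>\<alpha>)*(\<beta>\<bullet>\<beta>)"
proof (rule ccontr)
  have L: "\<beta>\<bullet>\<beta> > 0" "\<alpha>\<bullet>\<alpha> > 0" using cb' by auto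
  assume "\<not> ?thesis"
  moreover have "(\<alpha>\<bullet>\<beta>)^2 \<le> (\<alpha>\<bullet>\<alpha>)*(\<beta>\<bullet>\<beta>)" by (rule Cauchy_Schwarz_ineq)
  ultimately have eq: "(\<alpha>\<bullet>\<beta>)*(\<alpha>\<bullet>\<beta>) = (\<alpha>\<bullet>\<alpha>)*(\<beta>\<bullet>\<beta>)" by (simp add: power2_eq_square)
  define r where "r = (\<alpha>\<bullet>\<beta>)/(\<beta>\<bullet>\<beta>)"
  have "(\<alpha> - r *\<^sub>R \<beta>) \<bullet> (\<alpha> - r *\<^sub>R \<beta>) = \<alpha>\<bullet>\<alpha> - 2*r*(\<alpha>\<bullet>\<beta>) + r*r*(\<beta>\<bullet>\<beta>)"
    by (simp add: inner_diff_left inner_diff_right inner_commute[of \<beta> \<alpha>] algebra_simps)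
  also have "\<dots> = 0" unfolding r_def using L eq by (simp add: field_simps)
  finally have ar: "\<alpha> = r *\<^sub>R \<beta>" by simp
  then have "r = 1 \<or> r = -1" using rrs_red[OF R cb'(2)] cb'(1) by auto
  then show False
  proof
    assume "r = 1"
    then have ab: "\<alpha> = \<beta>" using ar by simp
    have "coroot ((1/2) *\<^sub>R \<alpha>) = coroot \<alpha> + coroot \<alpha>"
      unfolding coroot_def using L by (simp add: scaleR_add_left[symmetric])
    then have "coroot ((1/2) *\<^sub>R \<alpha>) = coroot \<gamma>" using cr ab by simp
    then have "(1/2) *\<^sub>R \<alpha> = \<gamma>" using coroot_inj[of "(1/2) *\<^sub>R \<alpha>" \<gamma>] cb'(7,9) by simp
    then have "(2::real) *\<^sub>R \<gamma> = \<alpha>" by auto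
    then have "(2::real) = 1 \<or> (2::real) = -1" using rrs_red[OF R cb'(3)] cb'(1) by metis
    then show False by simp
  next
    assume "r = -1"
    then have "\<alpha> = - \<beta>" using ar by simp
    then show False using cb'(4,5) by simp
  qed
qed

lemma key_le:
  assumes le: "\<beta>\<bullet>\<beta> \<le> \<alpha>\<bullet>\<alpha>"
  shows "btw lhd \<alpha> \<gamma> \<beta>"
proof -
  have L: "\<beta>\<bullet>\<beta> > 0" "\<alpha>\<bullet>\<alpha> > 0" using cb' by auto
  note pa = pair_ab[OF R Dp rho RO a b c cr]
  obtain i::int where i: "2*(\<alpha>\<bullet>\<beta>)/(\<alpha>\<bullet>\<alpha>) = of_int i"
    using rrs_int[OF R cb'(1) cb'(2)] pa(1) Ints_cases by metis
  obtain j::int where j: "2*(\<alpha>\<bullet>\<beta>)/(\<beta>\<bullet>\<beta>) = of_int j"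
    using rrs_int[OF R cb'(2) cb'(1)] pa(2) Ints_cases by metis
  have pi: "\<alpha>\<bullet>\<beta> = of_int i * (\<alpha>\<bullet>\<alpha>) / 2" using i L by (simp add: field_simps)
  have pj: "\<alpha>\<bullet>\<beta> = of_int j * (\<beta>\<bullet>\<beta>) / 2" using j L by (simp add: field_simps)
  have ijr: "of_int (i*j) = 4*((\<alpha>\<bullet>\<beta>)*(\<alpha>\<bullet>\<beta>))/((\<alpha>\<bullet>\<alpha>)*(\<beta>\<bullet>\<beta>))"
    unfolding of_int_mult i[symmetric] j[symmetric] by (simp add: field_simps)
  have "4*((\<alpha>\<bullet>\<beta>)*(\<alpha>\<bullet>\<beta>))/((\<alpha>\<bullet>\<alpha>)*(\<beta>\<bullet>\<beta>)) < 4"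
    using strict_cs L by (simp add: divide_less_eq)
  then have ij1: "i*j < 4" using ijr by linarith
  have "0 \<le> 4*((\<alpha>\<bullet>\<beta>)*(\<alpha>\<bullet>\<beta>))/((\<alpha>\<bullet>\<alpha>)*(\<beta>\<bullet>\<beta>))" using L by simp
  then have ij2: "0 \<le> i*j" using ijr by linarith
  have z1: "(i = 0) \<longleftrightarrow> (\<alpha>\<bullet>\<beta> = 0)"
  proof -
    have "(i = 0) \<longleftrightarrow> (of_int i = (0::real))" by simp
    also have "\<dots> \<longleftrightarrow> 2*(\<alpha>\<bullet>\<beta>)/(\<alpha>\<bullet>\<alpha>) = 0" using i by simp
    also have "\<dots> \<longleftrightarrow> \<alpha>\<bullet>\<beta> = 0" using L by simp
    finally show ?thesis .
  qed
  have z2: "(j = 0) \<longleftrightarrow> (\<alpha>\<bullet>\<beta> = 0)"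
  proof -
    have "(j = 0) \<longleftrightarrow> (of_int j = (0::real))" by simp
    also have "\<dots> \<longleftrightarrow> 2*(\<alpha>\<bullet>\<beta>)/(\<beta>\<bullet>\<beta>) = 0" using j by simp
    also have "\<dots> \<longleftrightarrow> \<alpha>\<bullet>\<beta> = 0" using L by simp
    finally show ?thesis .
  qed
  have ij3: "(i = 0) = (j = 0)" using z1 z2 by simp
  have "\<bar>2*(\<alpha>\<bullet>\<beta>)\<bar>/(\<alpha>\<bullet>\<alpha>) \<le> \<bar>2*(\<alpha>\<bullet>\<beta>)\<bar>/(\<beta>\<bullet>\<beta>)"
    by (rule divide_left_mono) (use L le in auto)
  then have "\<bar>2*(\<alpha>\<bullet>\<beta>)/(\<alpha>\<bullet>\<alpha>)\<bar> \<le> \<bar>2*(\<alpha>\<bullet>\<beta>)/(\<beta>\<bullet>\<beta>)\<bar>"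
    by (simp only: abs_div_pos[OF L(1)] abs_div_pos[OF L(2)])
  then have ij4: "\<bar>i\<bar> \<le> \<bar>j\<bar>" unfolding i j by linarith
  have LL: "\<beta>\<bullet>\<beta> \<noteq> 0" using L by simp
  from int_cases[OF ij1 ij2 ij3 ij4] show ?thesis
  proof (elim disjE conjE)
    assume "i = 0" "j = 0"
    then have "\<alpha>\<bullet>\<beta> = 0" using pi by simp
    then show ?thesis using case_00[OF R Dp rho RO a b c cr _ le] by simp
  next
    assume "i = 1" "j = 1"
    then have e1: "\<alpha>\<bullet>\<beta> = (\<beta>\<bullet>\<beta>)/2" and e2: "\<alpha>\<bullet>\<beta> = (\<alpha>\<bullet>\<alpha>)/2" using pi pj by simp_all
    have "\<alpha>\<bullet>\<alpha> = \<beta>\<bullet>\<beta>" using e1 e2 by linarith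
    then show ?thesis using case_11[OF R Dp rho RO a b c cr] e1 by simp
  next
    assume "i = 1" "j = 2"
    then have e1: "\<alpha>\<bullet>\<beta> = \<beta>\<bullet>\<beta>" and e2: "\<alpha>\<bullet>\<beta> = (\<alpha>\<bullet>\<alpha>)/2" using pi pj by simp_all
    have "\<alpha>\<bullet>\<alpha> = 2*(\<beta>\<bullet>\<beta>)" using e1 e2 by linarith
    then show ?thesis using case_12[OF R Dp rho RO a b c cr] e1 by simp
  next
    assume "i = 1" "j = 3"
    then have e1: "\<alpha>\<bullet>\<beta> = 3*(\<beta>\<bullet>\<beta>)/2" and e2: "\<alpha>\<bullet>\<beta> = (\<alpha>\<bullet>\<alpha>)/2" using pi pj by simp_all
    have "\<alpha>\<bullet>\<alpha> = 3*(\<beta>\<bullet>\<beta>)" using e1 e2 by linarith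
    then show ?thesis using case_13[OF R Dp rho RO a b c cr] e1 by simp
  next
    assume "i = -1" "j = -1"
    then have e1: "\<alpha>\<bullet>\<beta> = -(\<beta>\<bullet>\<beta>)/2" and e2: "\<alpha>\<bullet>\<beta> = -(\<alpha>\<bullet>\<alpha>)/2" using pi pj by simp_all
    have "\<alpha>\<bullet>\<alpha> = \<beta>\<bullet>\<beta>" using e1 e2 by linarith
    then show ?thesis using case_mm11[OF R Dp rho RO a b c cr] e1 by simp
  next
    assume "i = -1" "j = -2"
    then have e1: "\<alpha>\<bullet>\<beta> = -(\<beta>\<bullet>\<beta>)" and e2: "\<alpha>\<bullet>\<beta> = -(\<alpha>\<bullet>\<alpha>)/2" using pi pj by simp_all
    have "\<alpha>\<bullet>\<alpha> = 2*(\<beta>\<bullet>\<beta>)" using e1 e2 by linarith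
    then show ?thesis using case_m12[OF R Dp rho RO a b c cr] e1 by simp
  next
    assume "i = -1" "j = -3"
    then have e1: "\<alpha>\<bullet>\<beta> = -3*(\<beta>\<bullet>\<beta>)/2" and e2: "\<alpha>\<bullet>\<beta> = -(\<alpha>\<bullet>\<alpha>)/2" using pi pj by simp_all
    have "\<alpha>\<bullet>\<alpha> = 3*(\<beta>\<bullet>\<beta>)" using e1 e2 by linarith
    then show ?thesis using case_m13[OF R Dp rho RO a b c cr] e1 by simp
  qed
qed

end

lemma key:
  fixes \<Delta> Dp :: "'a::euclidean_space set"
  assumes R: "reduced_root_system \<Delta>" and Dp: "Dp = {x\<in>\<Delta>. \<rho> \<bullet> x > 0}"
    and rho: "\<forall>x\<in>\<Delta>. \<rho> \<bullet> x \<noteq> 0"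
    and RO: "reflection_order Dp lhd"
    and a: "\<alpha> \<in> Dp" and b: "\<beta> \<in> Dp" and c: "\<gamma> \<in> Dp"
    and cr: "coroot \<gamma> = coroot \<alpha> + coroot \<beta>"
  shows "btw lhd \<alpha> \<gamma> \<beta>"
proof (cases "\<beta>\<bullet>\<beta> \<le> \<alpha>\<bullet>\<alpha>")
  case True
  then show ?thesis using key_le[OF R Dp rho RO a b c cr] by simp
next
  case False
  have cr': "coroot \<gamma> = coroot \<beta> + coroot \<alpha>" using cr by (simp add: add.commute)
  have "btw lhd \<beta> \<gamma> \<alpha>" using key_le[OF R Dp rho RO b a c cr'] False by simp
  then show ?thesis using btw_sym by metis
qed

definition Sset :: "'a::euclidean_space set \<Rightarrow> 'a \<Rightarrow> 'a set" where
  "Sset Dp \<mu> = pos_part Dp \<mu> \<union> uminus ` neg_part Dp \<mu>"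

lemma uminus_image_iff: "(y \<in> uminus ` A) = (- y \<in> (A::'a::ab_group_add set))"
  by (metis image_eqI minus_minus imageE)

context
  fixes \<Delta> Dp :: "'a::euclidean_space set" and \<mu> \<rho> :: 'a and lhd
  assumes R: "reduced_root_system \<Delta>" and Dp: "Dp = {x\<in>\<Delta>. \<rho> \<bullet> x > 0}"
    and rho: "\<forall>x\<in>\<Delta>. \<rho> \<bullet> x \<noteq> 0" and RO: "lhd \<in> RO \<mu> Dp"
begin

lemma ROr: "reflection_order Dp lhd" using RO RO_def by auto
lemma sto: "strict_total_order_on Dp lhd" using ROr reflection_order_def by auto
lemma blk1: assumes "u \<in> neg_part Dp \<mu>" "v \<in> zero_part Dp \<mu>" shows "lhd u v"
  using RO assms unfolding RO_def by blast
lemma blk2: assumes "u \<in> zero_part Dp \<mu>" "v \<in> pos_part Dp \<mu>" shows "lhd u v"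
  using RO assms unfolding RO_def by blast
lemma blk3: assumes "u \<in> neg_part Dp \<mu>" "v \<in> pos_part Dp \<mu>" shows "lhd u v"
  using RO assms unfolding RO_def by blast
lemma asym: "x \<in> Dp \<Longrightarrow> y \<in> Dp \<Longrightarrow> lhd x y \<Longrightarrow> lhd y x \<Longrightarrow> False"
  using sto unfolding strict_total_order_on_def by blast
lemma trans': "x \<in> Dp \<Longrightarrow> y \<in> Dp \<Longrightarrow> z \<in> Dp \<Longrightarrow> lhd x y \<Longrightarrow> lhd y z \<Longrightarrow> lhd x z"
  using sto unfolding strict_total_order_on_def by blast

lemma keyc: "\<alpha> \<in> Dp \<Longrightarrow> \<beta> \<in> Dp \<Longrightarrow> \<gamma> \<in> Dp \<Longrightarrow> coroot \<gamma> = coroot \<alpha> + coroot \<beta> \<Longrightarrow> btw lhd \<alpha> \<gamma> \<beta>"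
  using key[OF R Dp rho ROr] by blast

lemma parts: "pos_part Dp \<mu> \<subseteq> Dp" "neg_part Dp \<mu> \<subseteq> Dp" "zero_part Dp \<mu> \<subseteq> Dp"
  by (auto simp: pos_part_def neg_part_def zero_part_def)

lemma DpD: "x \<in> Dp \<Longrightarrow> x \<in> \<Delta>" "x \<in> Dp \<Longrightarrow> \<rho> \<bullet> x > 0" using Dp by auto

lemma rc: "x \<in> \<Delta> \<Longrightarrow> \<rho> \<bullet> coroot x > 0 \<longleftrightarrow> \<rho> \<bullet> x > 0" "x \<in> \<Delta> \<Longrightarrow> \<rho> \<bullet> coroot x < 0 \<longleftrightarrow> \<rho> \<bullet> x < 0"
  using sign_coroot rrs_nz[OF R] by blast+

lemma pairing_neg: "pairing \<mu> (- x) = - pairing \<mu> x" unfolding pairing_def coroot_neg by simp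

lemma S_cases: "x \<in> Sset Dp \<mu> \<Longrightarrow> x \<in> pos_part Dp \<mu> \<or> - x \<in> neg_part Dp \<mu>"
  unfolding Sset_def using uminus_image_iff by blast

lemma S_Delta: "x \<in> Sset Dp \<mu> \<Longrightarrow> x \<in> \<Delta>"
  using S_cases parts DpD rrs_neg[OF R] by (metis minus_minus subsetD)

lemma S_pos: "x \<in> Sset Dp \<mu> \<Longrightarrow> \<rho> \<bullet> x > 0 \<Longrightarrow> x \<in> pos_part Dp \<mu>"
  using S_cases parts DpD by (metis inner_minus_right neg_less_0_iff_less not_less_iff_gr_or_eq subsetD)

lemma S_neg: "x \<in> Sset Dp \<mu> \<Longrightarrow> \<rho> \<bullet> x < 0 \<Longrightarrow> - x \<in> neg_part Dp \<mu>"
  using S_cases parts DpD by (metis less_asym subsetD)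

lemma pos_S: "x \<in> pos_part Dp \<mu> \<Longrightarrow> x \<in> Sset Dp \<mu>" unfolding Sset_def by auto
lemma neg_S: "- x \<in> neg_part Dp \<mu> \<Longrightarrow> x \<in> Sset Dp \<mu>" unfolding Sset_def using uminus_image_iff by blast

lemma pos_rho: "x \<in> pos_part Dp \<mu> \<Longrightarrow> \<rho> \<bullet> x > 0" using parts DpD by blast
lemma neg_rho: "- x \<in> neg_part Dp \<mu> \<Longrightarrow> \<rho> \<bullet> x < 0" using parts DpD
  by (metis inner_minus_right neg_0_less_iff_less subsetD)

lemma prec_pp: "x \<in> pos_part Dp \<mu> \<Longrightarrow> y \<in> pos_part Dp \<mu> \<Longrightarrow> prec_ord Dp \<mu> lhd x y \<longleftrightarrow> lhd x y"
  unfolding prec_ord_def uminus_image_iff using pos_rho neg_rho by (metis less_asym)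
lemma prec_nn: "- x \<in> neg_part Dp \<mu> \<Longrightarrow> - y \<in> neg_part Dp \<mu> \<Longrightarrow> prec_ord Dp \<mu> lhd x y \<longleftrightarrow> lhd (-x) (-y)"
  unfolding prec_ord_def uminus_image_iff using pos_rho neg_rho by (metis less_asym)
lemma prec_pn: "x \<in> pos_part Dp \<mu> \<Longrightarrow> - y \<in> neg_part Dp \<mu> \<Longrightarrow> prec_ord Dp \<mu> lhd x y"
  unfolding prec_ord_def uminus_image_iff by blast

lemma rho_sum:
  assumes "x \<in> \<Delta>" "y \<in> \<Delta>" "z \<in> \<Delta>" "coroot z = coroot x + coroot y"
  shows "\<rho> \<bullet> x > 0 \<Longrightarrow> \<rho> \<bullet> y > 0 \<Longrightarrow> \<rho> \<bullet> z > 0" "\<rho> \<bullet> x < 0 \<Longrightarrow> \<rho> \<bullet> y < 0 \<Longrightarrow> \<rho> \<bullet> z < 0"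
proof -
  have e: "\<rho> \<bullet> coroot z = \<rho> \<bullet> coroot x + \<rho> \<bullet> coroot y" using assms(4) by (simp add: inner_add_right)
  show "\<rho> \<bullet> x > 0 \<Longrightarrow> \<rho> \<bullet> y > 0 \<Longrightarrow> \<rho> \<bullet> z > 0" using e rc assms(1-3) by (metis add_pos_pos)
  show "\<rho> \<bullet> x < 0 \<Longrightarrow> \<rho> \<bullet> y < 0 \<Longrightarrow> \<rho> \<bullet> z < 0" using e rc assms(1-3) by (metis add_neg_neg)
qed

lemma P_mixed:
  assumes x: "x \<in> pos_part Dp \<mu>" and y: "- y \<in> neg_part Dp \<mu>" and z: "z \<in> Sset Dp \<mu>"
    and cr: "coroot z = coroot x + coroot y"
  shows "prec_ord Dp \<mu> lhd x z \<and> prec_ord Dp \<mu> lhd z y"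
proof (cases "z \<in> pos_part Dp \<mu>")
  case True
  have "coroot x = coroot z + coroot (-y)" using cr by (simp add: coroot_neg algebra_simps)
  then have b: "btw lhd z x (-y)" using keyc True x y parts by blast
  have l1: "lhd (-y) x" "lhd (-y) z" using blk3 y x True by auto
  have "lhd x z" using b l1 asym x y True parts unfolding btw_def by blast
  then show ?thesis using prec_pp[OF x True] prec_pn[OF True y] by simp
next
  case False
  then have zn: "- z \<in> neg_part Dp \<mu>" using S_cases z by blast
  have "coroot (-y) = coroot x + coroot (-z)" using cr by (simp add: coroot_neg algebra_simps)
  then have b: "btw lhd x (-y) (-z)" using keyc zn x y parts by blast
  have l1: "lhd (-z) x" using blk3 zn x by auto
  have "lhd (-z) (-y)" using b l1 asym trans' x y zn parts unfolding btw_def by blast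
  then show ?thesis using prec_pn[OF x zn] prec_nn[OF zn y] by simp
qed

lemma P:
  assumes x: "x \<in> Sset Dp \<mu>" and y: "y \<in> Sset Dp \<mu>" and z: "z \<in> Sset Dp \<mu>"
    and cr: "coroot z = coroot x + coroot y"
  shows "btw (prec_ord Dp \<mu> lhd) x z y"
proof -
  have D: "x \<in> \<Delta>" "y \<in> \<Delta>" "z \<in> \<Delta>" using S_Delta x y z by auto
  consider "x \<in> pos_part Dp \<mu>" "y \<in> pos_part Dp \<mu>" | "- x \<in> neg_part Dp \<mu>" "- y \<in> neg_part Dp \<mu>"
    | "x \<in> pos_part Dp \<mu>" "- y \<in> neg_part Dp \<mu>" | "- x \<in> neg_part Dp \<mu>" "y \<in> pos_part Dp \<mu>"
    using S_cases x y by blast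
  then show ?thesis
  proof cases
    case 1
    then have "\<rho> \<bullet> z > 0" using rho_sum[OF D cr] pos_rho by blast
    then have zp: "z \<in> pos_part Dp \<mu>" using S_pos z by blast
    have "btw lhd x z y" using keyc 1 zp parts cr by blast
    then show ?thesis unfolding btw_def using prec_pp 1 zp by blast
  next
    case 2
    then have "\<rho> \<bullet> z < 0" using rho_sum[OF D cr] neg_rho by blast
    then have zn: "- z \<in> neg_part Dp \<mu>" using S_neg z by blast
    have "coroot (-z) = coroot (-x) + coroot (-y)" using cr by (simp add: coroot_neg)
    then have "btw lhd (-x) (-z) (-y)" using keyc 2 zn parts by blast
    then show ?thesis unfolding btw_def using prec_nn 2 zn by blast
  next
    case 3
    then show ?thesis using P_mixed[OF 3 z cr] unfolding btw_def by blast
  next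
    case 4
    have "coroot z = coroot y + coroot x" using cr by (simp add: add.commute)
    then show ?thesis using P_mixed[OF 4(2) 4(1) z] unfolding btw_def by blast
  qed
qed

lemma Q:
  assumes x: "x \<in> Sset Dp \<mu>" and z: "z \<in> Sset Dp \<mu>" and b: "\<beta> \<in> Dp"
    and cr: "coroot z = coroot x + coroot \<beta>"
    and h: "\<beta> \<in> zero_part Dp \<mu> \<or> (x \<in> pos_part Dp \<mu> \<and> \<beta> \<in> neg_part Dp \<mu>)"
  shows "prec_ord Dp \<mu> lhd z x"
proof (cases "x \<in> pos_part Dp \<mu>")
  case True
  have D: "x \<in> \<Delta>" "\<beta> \<in> \<Delta>" "z \<in> \<Delta>" using S_Delta x z b DpD by auto
  have "\<rho> \<bullet> z > 0" using rho_sum[OF D cr] pos_rho True DpD b by blast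
  then have zp: "z \<in> pos_part Dp \<mu>" using S_pos z by blast
  have bt: "btw lhd x z \<beta>" using keyc True zp parts cr b by blast
  have "lhd \<beta> x" using h blk2 blk3 True by blast
  then have "lhd z x" using bt asym trans' True zp b parts unfolding btw_def by blast
  then show ?thesis using prec_pp zp True by blast
next
  case False
  then have xn: "- x \<in> neg_part Dp \<mu>" and bz: "\<beta> \<in> zero_part Dp \<mu>" using S_cases x h by blast+
  show ?thesis
  proof (cases "z \<in> pos_part Dp \<mu>")
    case True
    then show ?thesis using prec_pn xn by blast
  next
    case False
    then have zn: "- z \<in> neg_part Dp \<mu>" using S_cases z by blast
    have "coroot (-x) = coroot (-z) + coroot \<beta>" using cr by (simp add: coroot_neg algebra_simps)
    then have bt: "btw lhd (-z) (-x) \<beta>" using keyc zn xn b parts by blast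
    have "lhd (-z) \<beta>" using blk1 zn bz by blast
    then have "lhd (-z) (-x)" using bt asym trans' zn xn b parts unfolding btw_def by blast
    then show ?thesis using prec_nn zn xn by blast
  qed
qed

lemma E1:
  assumes x: "- x \<in> neg_part Dp \<mu>" and y: "y \<in> pos_part Dp \<mu>" and z: "z \<in> Sset Dp \<mu>"
    and cr: "coroot z = coroot x + coroot y"
  shows "prec_ord Dp \<mu> lhd z x"
proof -
  have "coroot z = coroot y + coroot x" using cr by (simp add: add.commute)
  then have "prec_ord Dp \<mu> lhd y z \<and> prec_ord Dp \<mu> lhd z x" using P_mixed[OF y x z] by blast
  then show ?thesis by blast
qed

end

lemma med_lt:
  fixes k1 k2 m1 m2 :: real
  assumes "m1 > 0" "m2 > 0" "k1/m1 < k2/m2"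
  shows "k1/m1 < (k1+k2)/(m1+m2)" "(k1+k2)/(m1+m2) < k2/m2"
proof -
  have "k1*m2 < k2*m1" using assms by (simp add: divide_less_eq less_divide_eq field_simps)
  then show "k1/m1 < (k1+k2)/(m1+m2)" "(k1+k2)/(m1+m2) < k2/m2" using assms
    by (simp_all add: divide_less_eq less_divide_eq field_simps)
qed

lemma med_eq:
  fixes k1 k2 m1 m2 :: real
  assumes "m1 > 0" "m2 > 0" "k1/m1 = k2/m2"
  shows "(k1+k2)/(m1+m2) = k1/m1"
proof -
  have "k1*m2 = k2*m1" using assms by (simp add: field_simps)
  then show ?thesis using assms by (simp add: field_simps)
qed

lemma frac_lt:
  fixes k1 k3 m1 m3 :: real
  assumes "m1 > 0" "m3 > 0" "k1*m3 < k3*m1"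
  shows "k1/m1 < k3/m3"
  using assms by (simp add: divide_less_eq less_divide_eq field_simps)

context
  fixes \<Delta> Dp :: "'a::euclidean_space set" and \<mu> \<rho> :: 'a and lhd
  assumes R: "reduced_root_system \<Delta>" and Dp: "Dp = {x\<in>\<Delta>. \<rho> \<bullet> x > 0}"
    and rho: "\<forall>x\<in>\<Delta>. \<rho> \<bullet> x \<noteq> 0" and RO: "lhd \<in> RO \<mu> Dp"
begin

lemmas pos_S' = pos_S[OF R Dp rho RO]
lemmas neg_S' = neg_S[OF R Dp rho RO]
lemmas pairing_neg' = pairing_neg[OF R Dp rho RO]
lemmas P' = P[OF R Dp rho RO]
lemmas Q' = Q[OF R Dp rho RO]
lemmas E1' = E1[OF R Dp rho RO]
lemmas S_cases' = S_cases[OF R Dp rho RO]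

lemma rac_bar: "real_aff_coroot \<Delta> b \<Longrightarrow> bar_root b \<in> \<Delta> \<and> coroot (bar_root b) = fst b"
proof -
  assume "real_aff_coroot \<Delta> b"
  then obtain x where x: "x \<in> \<Delta>" "fst b = coroot x" unfolding real_aff_coroot_def by auto
  then have "coroot (fst b) = x" using coroot_coroot rrs_nz[OF R] by metis
  then show ?thesis unfolding bar_root_def using x by simp
qed

lemma bar_Dp: "real_aff_coroot \<Delta> b \<Longrightarrow> bar_root b \<in> Dp \<longleftrightarrow> \<rho> \<bullet> fst b > 0"
  using rac_bar rc[OF R Dp rho RO] Dp by (metis (no_types, lifting) mem_Collect_eq)

lemma bar_nDp: "real_aff_coroot \<Delta> b \<Longrightarrow> bar_root b \<notin> Dp \<Longrightarrow> \<rho> \<bullet> fst b < 0"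
proof -
  assume r: "real_aff_coroot \<Delta> b" and n: "bar_root b \<notin> Dp"
  have "bar_root b \<in> \<Delta>" using rac_bar r by blast
  then have "\<rho> \<bullet> bar_root b < 0" using n rho Dp by (auto simp: not_less_iff_gr_or_eq)
  then show ?thesis using rc[OF R Dp rho RO] rac_bar r by metis
qed

lemma pair_bar: "real_aff_coroot \<Delta> b \<Longrightarrow> pairing \<mu> (bar_root b) = \<mu> \<bullet> fst b"
  unfolding pairing_def using rac_bar by metis

lemma inv_iff: "b \<in> Inv \<Delta> Dp \<mu> \<longleftrightarrow> real_aff_coroot \<Delta> b \<and> (snd b > 0 \<or> (snd b = 0 \<and> bar_root b \<in> Dp)) \<and>
    \<not> (snd b - \<mu> \<bullet> fst b > 0 \<or> (snd b - \<mu> \<bullet> fst b = 0 \<and> bar_root b \<in> Dp))"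
  unfolding Inv_def aff_positive_def aff_deg_def t_trans_def bar_root_def by simp

lemma pos_iff: "aff_positive Dp b \<longleftrightarrow> (snd b > 0 \<or> (snd b = 0 \<and> bar_root b \<in> Dp))"
  unfolding aff_positive_def aff_deg_def by simp

lemma inv_facts:
  assumes "b \<in> Inv \<Delta> Dp \<mu>"
  shows "real_aff_coroot \<Delta> b" "\<mu> \<bullet> fst b > 0" "0 \<le> snd b" "snd b \<le> \<mu> \<bullet> fst b"
    "snd b = \<mu> \<bullet> fst b \<Longrightarrow> bar_root b \<notin> Dp" "snd b = 0 \<Longrightarrow> bar_root b \<in> Dp"
    "bar_root b \<in> Sset Dp \<mu>"
proof -
  note h = assms[unfolded inv_iff]
  show r: "real_aff_coroot \<Delta> b" using h by blast
  show m: "\<mu> \<bullet> fst b > 0" using h by auto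
  show "0 \<le> snd b" "snd b \<le> \<mu> \<bullet> fst b" using h by auto
  show "snd b = \<mu> \<bullet> fst b \<Longrightarrow> bar_root b \<notin> Dp" using h by auto
  show "snd b = 0 \<Longrightarrow> bar_root b \<in> Dp" using h by auto
  show "bar_root b \<in> Sset Dp \<mu>"
  proof (cases "bar_root b \<in> Dp")
    case True
    then have "bar_root b \<in> pos_part Dp \<mu>" using pair_bar[OF r] m unfolding pos_part_def by simp
    then show ?thesis by (rule pos_S')
  next
    case False
    have bD: "bar_root b \<in> \<Delta>" using rac_bar r by blast
    have "\<rho> \<bullet> bar_root b < 0" using bD False rho Dp by (auto simp: not_less_iff_gr_or_eq)
    then have "- bar_root b \<in> Dp" using rrs_neg[OF R bD] Dp by simp
    moreover have "pairing \<mu> (- bar_root b) < 0" using pair_bar[OF r] m pairing_neg' by simp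
    ultimately have "- bar_root b \<in> neg_part Dp \<mu>" unfolding neg_part_def by simp
    then show ?thesis by (rule neg_S')
  qed
qed

lemma cr_bar:
  assumes "real_aff_coroot \<Delta> a" "real_aff_coroot \<Delta> b" "real_aff_coroot \<Delta> (aff_add a b)"
  shows "coroot (bar_root (aff_add a b)) = coroot (bar_root a) + coroot (bar_root b)"
  using rac_bar assms by (simp add: aff_add_def)

lemma aff_add_simps: "fst (aff_add a b) = fst a + fst b" "snd (aff_add a b) = snd a + snd b"
  by (simp_all add: aff_add_def)

lemma inv_less_iff: "inv_less Dp \<mu> lhd x y \<longleftrightarrow>
   snd x / (\<mu> \<bullet> fst x) < snd y / (\<mu> \<bullet> fst y) \<or>
   (snd x / (\<mu> \<bullet> fst x) = snd y / (\<mu> \<bullet> fst y) \<and> prec_ord Dp \<mu> lhd (bar_root y) (bar_root x))"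
  unfolding inv_less_def d_val_def aff_deg_def by simp


lemma part1:
  assumes a: "a \<in> Inv \<Delta> Dp \<mu>" and b: "b \<in> Inv \<Delta> Dp \<mu>"
    and cr: "real_aff_coroot \<Delta> (aff_add a b)" and cp: "aff_positive Dp (aff_add a b)"
  shows "aff_add a b \<in> Inv \<Delta> Dp \<mu> \<and>
    ((inv_less Dp \<mu> lhd a (aff_add a b) \<and> inv_less Dp \<mu> lhd (aff_add a b) b) \<or>
     (inv_less Dp \<mu> lhd b (aff_add a b) \<and> inv_less Dp \<mu> lhd (aff_add a b) a))"
proof -
  define c where "c = aff_add a b"
  note fa = inv_facts[OF a] and fb = inv_facts[OF b]
  have k3: "snd c = snd a + snd b" and m3: "\<mu> \<bullet> fst c = \<mu> \<bullet> fst a + \<mu> \<bullet> fst b"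
    unfolding c_def aff_add_simps by (simp_all add: inner_add_right)
  have r3: "\<rho> \<bullet> fst c = \<rho> \<bullet> fst a + \<rho> \<bullet> fst b"
    unfolding c_def aff_add_simps by (simp add: inner_add_right)
  have cI: "c \<in> Inv \<Delta> Dp \<mu>"
  proof -
    have "\<not> (snd c - \<mu> \<bullet> fst c > 0 \<or> (snd c - \<mu> \<bullet> fst c = 0 \<and> bar_root c \<in> Dp))"
    proof
      assume h: "snd c - \<mu> \<bullet> fst c > 0 \<or> (snd c - \<mu> \<bullet> fst c = 0 \<and> bar_root c \<in> Dp)"
      have "snd c - \<mu> \<bullet> fst c \<le> 0" using k3 m3 fa fb by linarith
      then have e: "snd c - \<mu> \<bullet> fst c = 0" "bar_root c \<in> Dp" using h by auto
      then have "snd a = \<mu> \<bullet> fst a" "snd b = \<mu> \<bullet> fst b" using k3 m3 fa fb by linarith+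
      then have "bar_root a \<notin> Dp" "bar_root b \<notin> Dp" using fa fb by auto
      then have "\<rho> \<bullet> fst a < 0" "\<rho> \<bullet> fst b < 0" using bar_nDp fa(1) fb(1) by auto
      then have "\<rho> \<bullet> fst c < 0" using r3 by linarith
      then show False using e(2) bar_Dp cr c_def by fastforce
    qed
    then show ?thesis unfolding inv_iff using cr cp pos_iff c_def by blast
  qed
  note fc = inv_facts[OF cI]
  have crb: "coroot (bar_root c) = coroot (bar_root a) + coroot (bar_root b)"
    using cr_bar fa(1) fb(1) cr c_def by blast
  define d1 where "d1 = snd a / (\<mu> \<bullet> fst a)"
  define d2 where "d2 = snd b / (\<mu> \<bullet> fst b)"
  define d3 where "d3 = snd c / (\<mu> \<bullet> fst c)"
  have "(inv_less Dp \<mu> lhd a c \<and> inv_less Dp \<mu> lhd c b) \<or>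
        (inv_less Dp \<mu> lhd b c \<and> inv_less Dp \<mu> lhd c a)"
  proof (cases d1 d2 rule: linorder_cases)
    case less
    then have "d1 < d3" "d3 < d2" using med_lt[OF fa(2) fb(2)] unfolding d1_def d2_def d3_def k3 m3 by auto
    then show ?thesis unfolding inv_less_iff d1_def d2_def d3_def by auto
  next
    case greater
    have e3: "(snd b + snd a) / (\<mu> \<bullet> fst b + \<mu> \<bullet> fst a) = d3" unfolding d3_def k3 m3
      by (simp add: add.commute)
    have "d2 < (snd b + snd a) / (\<mu> \<bullet> fst b + \<mu> \<bullet> fst a)"
      "(snd b + snd a) / (\<mu> \<bullet> fst b + \<mu> \<bullet> fst a) < d1"
      using med_lt[OF fb(2) fa(2), of "snd b" "snd a"] greater unfolding d1_def d2_def by auto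
    then have "d2 < d3" "d3 < d1" unfolding e3 by auto
    then show ?thesis unfolding inv_less_iff d1_def d2_def d3_def by auto
  next
    case equal
    then have e: "d3 = d1" using med_eq[OF fa(2) fb(2)] unfolding d1_def d2_def d3_def k3 m3 by auto
    have "btw (prec_ord Dp \<mu> lhd) (bar_root a) (bar_root c) (bar_root b)"
      using P' fa(7) fb(7) fc(7) crb by blast
    then show ?thesis unfolding inv_less_iff btw_def using e equal
      unfolding d1_def d2_def d3_def by auto
  qed
  then show ?thesis using cI c_def by simp
qed

lemma part2_one:
  assumes a: "a \<in> Inv \<Delta> Dp \<mu>" and br: "real_aff_coroot \<Delta> b" and bp: "aff_positive Dp b"
    and bn: "b \<notin> Inv \<Delta> Dp \<mu>" and cI: "aff_add a b \<in> Inv \<Delta> Dp \<mu>"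
  shows "inv_less Dp \<mu> lhd a (aff_add a b)"
proof -
  define c where "c = aff_add a b"
  note fa = inv_facts[OF a] and fc = inv_facts[OF cI[folded c_def]]
  have k3: "snd c = snd a + snd b" and m3: "\<mu> \<bullet> fst c = \<mu> \<bullet> fst a + \<mu> \<bullet> fst b"
    unfolding c_def aff_add_simps by (simp_all add: inner_add_right)
  have crb: "coroot (bar_root c) = coroot (bar_root a) + coroot (bar_root b)"
    using cr_bar fa(1) br fc(1) c_def by blast
  have bpos: "snd b > 0 \<or> (snd b = 0 \<and> bar_root b \<in> Dp)" using bp pos_iff by blast
  have bnot: "snd b - \<mu> \<bullet> fst b > 0 \<or> (snd b - \<mu> \<bullet> fst b = 0 \<and> bar_root b \<in> Dp)"
    using bn br bpos unfolding inv_iff by blast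
  define k1 where "k1 = snd a"
  define k2 where "k2 = snd b"
  define m1 where "m1 = \<mu> \<bullet> fst a"
  define m2 where "m2 = \<mu> \<bullet> fst b"
  have m1p: "m1 > 0" and k1n: "0 \<le> k1" "k1 \<le> m1" using fa unfolding k1_def m1_def by auto
  have m3p: "m1 + m2 > 0" using fc m3 unfolding m1_def m2_def by simp
  have k2n: "0 \<le> k2" using bpos unfolding k2_def by auto
  have k2m: "m2 \<le> k2" using bnot unfolding k2_def m2_def by auto
  have pb: "pairing \<mu> (bar_root b) = m2" using pair_bar br m2_def by simp
  have pa: "pairing \<mu> (bar_root a) = m1" using pair_bar fa(1) m1_def by simp
  have goal: "inv_less Dp \<mu> lhd a c \<longleftrightarrow> k1 / m1 < (k1+k2)/(m1+m2) \<or>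
     (k1 / m1 = (k1+k2)/(m1+m2) \<and> prec_ord Dp \<mu> lhd (bar_root c) (bar_root a))"
    unfolding inv_less_iff k3 m3 k1_def k2_def m1_def m2_def ..
  have G: "k1 / m1 < (k1+k2)/(m1+m2) \<or>
     (k1 / m1 = (k1+k2)/(m1+m2) \<and> prec_ord Dp \<mu> lhd (bar_root c) (bar_root a))"
  proof (cases "k1 * m2 < k2 * m1")
    case True
    then have "k1 * (m1 + m2) < (k1 + k2) * m1" by (simp add: algebra_simps)
    then show ?thesis using frac_lt[OF m1p m3p] by blast
  next
    case False
    show ?thesis
    proof (cases "m2 > 0")
      case True
      have "m2 * m1 \<le> k2 * m1" using k2m m1p by (simp add: mult_right_mono)
      moreover have "m2 * k1 \<le> m2 * m1" using k1n True by (simp add: mult_left_mono)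
      moreover have "m1 * m2 = m2 * m1" "m2 * k1 = k1 * m2" by (simp_all add: mult.commute)
      ultimately have q: "k2 * m1 = m2 * m1" "k1 * m2 = m1 * m2" using False by linarith+
      have e: "k2 = m2" using q(1) m1p by simp
      have e': "k1 = m1" using q(2) True by simp
      note e = e e'
      then have "bar_root b \<in> Dp" using bnot unfolding k2_def m2_def by simp
      then have yb: "bar_root b \<in> pos_part Dp \<mu>" using pb True unfolding pos_part_def by simp
      have "bar_root a \<notin> Dp" using fa(5) e unfolding k1_def m1_def by simp
      then have xa: "- bar_root a \<in> neg_part Dp \<mu>" using S_cases' fa(7) unfolding pos_part_def by blast
      have "prec_ord Dp \<mu> lhd (bar_root c) (bar_root a)" using E1'[OF xa yb fc(7) crb] .
      moreover have "k1 / m1 = (k1+k2)/(m1+m2)" using e m1p m3p by simp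
      ultimately show ?thesis by blast
    next
      case False2: False
      have "k1 * m2 \<le> 0" using k1n False2 by (simp add: mult_nonneg_nonpos)
      moreover have "0 \<le> k2 * m1" using k2n m1p by simp
      ultimately have z: "k2 * m1 = 0" "k1 * m2 = 0" using False by linarith+
      then have k20: "k2 = 0" using m1p by simp
      then have bD: "bar_root b \<in> Dp" using bpos unfolding k2_def by simp
      show ?thesis
      proof (cases "m2 = 0")
        case True
        then have "bar_root b \<in> zero_part Dp \<mu>" using bD pb unfolding zero_part_def by simp
        then have "prec_ord Dp \<mu> lhd (bar_root c) (bar_root a)" using Q' fa(7) fc(7) bD crb by blast
        moreover have "k1 / m1 = (k1+k2)/(m1+m2)" using True k20 by simp
        ultimately show ?thesis by blast
      next
        case False3: False
        then have k10: "k1 = 0" using z by simp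
        then have "bar_root a \<in> Dp" using fa(6) unfolding k1_def by simp
        then have xa: "bar_root a \<in> pos_part Dp \<mu>" using pa m1p unfolding pos_part_def by simp
        have "bar_root b \<in> neg_part Dp \<mu>" using bD pb False2 False3 unfolding neg_part_def by simp
        then have "prec_ord Dp \<mu> lhd (bar_root c) (bar_root a)" using Q' fa(7) fc(7) bD crb xa by blast
        moreover have "k1 / m1 = (k1+k2)/(m1+m2)" using k10 k20 by simp
        ultimately show ?thesis by blast
      qed
    qed
  qed
  show ?thesis using G goal c_def by simp
qed

lemma part2_ex:
  assumes ar: "real_aff_coroot \<Delta> a" and ap: "aff_positive Dp a"
    and br: "real_aff_coroot \<Delta> b" and bp: "aff_positive Dp b"
    and cI: "aff_add a b \<in> Inv \<Delta> Dp \<mu>"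
  shows "a \<in> Inv \<Delta> Dp \<mu> \<or> b \<in> Inv \<Delta> Dp \<mu>"
proof (rule ccontr)
  assume "\<not> ?thesis"
  then have na: "snd a - \<mu> \<bullet> fst a > 0 \<or> (snd a - \<mu> \<bullet> fst a = 0 \<and> bar_root a \<in> Dp)"
    and nb: "snd b - \<mu> \<bullet> fst b > 0 \<or> (snd b - \<mu> \<bullet> fst b = 0 \<and> bar_root b \<in> Dp)"
    using ar ap br bp unfolding inv_iff pos_iff by blast+
  define c where "c = aff_add a b"
  have k3: "snd c = snd a + snd b" and m3: "\<mu> \<bullet> fst c = \<mu> \<bullet> fst a + \<mu> \<bullet> fst b"
    and r3: "\<rho> \<bullet> fst c = \<rho> \<bullet> fst a + \<rho> \<bullet> fst b"
    unfolding c_def aff_add_simps by (simp_all add: inner_add_right)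
  have nc: "\<not> (snd c - \<mu> \<bullet> fst c > 0 \<or> (snd c - \<mu> \<bullet> fst c = 0 \<and> bar_root c \<in> Dp))"
    using cI c_def unfolding inv_iff by blast
  have cr: "real_aff_coroot \<Delta> c" using cI c_def unfolding inv_iff by blast
  have "snd c - \<mu> \<bullet> fst c = 0" using na nb nc k3 m3 by linarith
  then have "snd a - \<mu> \<bullet> fst a = 0" "snd b - \<mu> \<bullet> fst b = 0" using na nb k3 m3 by linarith+
  then have "bar_root a \<in> Dp" "bar_root b \<in> Dp" using na nb by auto
  then have "\<rho> \<bullet> fst a > 0" "\<rho> \<bullet> fst b > 0" using bar_Dp ar br by auto
  then have "bar_root c \<in> Dp" using r3 bar_Dp cr by simp
  then show False using nc \<open>snd c - \<mu> \<bullet> fst c = 0\<close> by simp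
qed

end

theorem proposition3p11:
  fixes \<Delta> Dp :: "'a::euclidean_space set" and \<mu> :: 'a and lhd :: "'a \<Rightarrow> 'a \<Rightarrow> bool"
  assumes "irreducible_root_system \<Delta>"
    and "Dp \<subseteq> \<Delta>" and "positive_system \<Delta> Dp"
    and "\<mu> \<in> weight_lattice \<Delta>"
    and "lhd \<in> RO \<mu> Dp"
  shows "(\<forall>a\<in>Inv \<Delta> Dp \<mu>. \<forall>b\<in>Inv \<Delta> Dp \<mu>.
            real_aff_coroot \<Delta> (aff_add a b) \<and> aff_positive Dp (aff_add a b) \<longrightarrow>
              aff_add a b \<in> Inv \<Delta> Dp \<mu> \<and>
              ((inv_less Dp \<mu> lhd a (aff_add a b) \<and> inv_less Dp \<mu> lhd (aff_add a b) b) \<or>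
               (inv_less Dp \<mu> lhd b (aff_add a b) \<and> inv_less Dp \<mu> lhd (aff_add a b) a)))
       \<and> (\<forall>a b. real_aff_coroot \<Delta> a \<and> aff_positive Dp a \<and>
               real_aff_coroot \<Delta> b \<and> aff_positive Dp b \<and> aff_add a b \<in> Inv \<Delta> Dp \<mu> \<longrightarrow>
              (a \<in> Inv \<Delta> Dp \<mu> \<and> inv_less Dp \<mu> lhd a (aff_add a b)) \<or>
              (b \<in> Inv \<Delta> Dp \<mu> \<and> inv_less Dp \<mu> lhd b (aff_add a b)))"
proof -
  have R: "reduced_root_system \<Delta>" using assms(1) irreducible_root_system_def by blast
  obtain \<rho> where rho: "\<forall>x\<in>\<Delta>. \<rho> \<bullet> x \<noteq> 0" and Dp: "Dp = {x\<in>\<Delta>. \<rho> \<bullet> x > 0}"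
    using assms(3) positive_system_def by blast
  note RO = assms(5)
  have comm: "\<And>a b. aff_add b a = aff_add a b" unfolding aff_add_def by (simp add: add.commute)
  show ?thesis
  proof (rule conjI; intro ballI allI impI)
    fix a b assume "a \<in> Inv \<Delta> Dp \<mu>" "b \<in> Inv \<Delta> Dp \<mu>"
      "real_aff_coroot \<Delta> (aff_add a b) \<and> aff_positive Dp (aff_add a b)"
    then show "aff_add a b \<in> Inv \<Delta> Dp \<mu> \<and>
              ((inv_less Dp \<mu> lhd a (aff_add a b) \<and> inv_less Dp \<mu> lhd (aff_add a b) b) \<or>
               (inv_less Dp \<mu> lhd b (aff_add a b) \<and> inv_less Dp \<mu> lhd (aff_add a b) a))"
      using part1[OF R Dp rho RO] by blast
  next
    fix a b assume h: "real_aff_coroot \<Delta> a \<and> aff_positive Dp a \<and>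
               real_aff_coroot \<Delta> b \<and> aff_positive Dp b \<and> aff_add a b \<in> Inv \<Delta> Dp \<mu>"
    then have cr: "real_aff_coroot \<Delta> (aff_add a b)" "aff_positive Dp (aff_add a b)"
      using inv_iff[OF R Dp rho RO] pos_iff[OF R Dp rho RO] by blast+
    show "(a \<in> Inv \<Delta> Dp \<mu> \<and> inv_less Dp \<mu> lhd a (aff_add a b)) \<or>
              (b \<in> Inv \<Delta> Dp \<mu> \<and> inv_less Dp \<mu> lhd b (aff_add a b))"
    proof (cases "a \<in> Inv \<Delta> Dp \<mu>")
      case aI: True
      show ?thesis
      proof (cases "b \<in> Inv \<Delta> Dp \<mu>")
        case True
        then show ?thesis using part1[OF R Dp rho RO aI True cr] aI by blast
      next
        case False
        then show ?thesis using part2_one[OF R Dp rho RO aI _ _ False] h aI by blast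
      qed
    next
      case False
      then have bI: "b \<in> Inv \<Delta> Dp \<mu>" using part2_ex[OF R Dp rho RO] h by blast
      have "inv_less Dp \<mu> lhd b (aff_add b a)"
        using part2_one[OF R Dp rho RO bI _ _ False] h comm by metis
      then show ?thesis using bI comm by metis
    qed
  qed
qed

end
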